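(* Let $a_0,a_1,a_2$ be complex numbers with $a_1\neq 0$ and $a_2\neq 0$. Let $(F(n,k))_{n\ge 0,\,k\in\mathbb{Z}}$ be defined by $F(0,0)=1$, $F(0,k)=0$ for $k\neq 0$, $F(n,k)=0$ for $k<0$, and for $n\ge 1$ and all $k$, \[ F(n,k)=(a_2 n+a_1 k+a_0)\,F(n-1,k)+F(n-1,k-1). \] Then for all integers $n,k\ge 0$, \[ F(n,k)=\frac{1}{a_1^k\,k!}\sum_{j=0}^{k}(-1)^{k-j}\binom{k}{j}\prod_{r=1}^{n}\bigl(a_0+a_1 j+r a_2\bigr). \]
   Context: For $n=0$ the empty product equals $1$. *)

theory Defs
  imports Complex_Main
begin

fun F :: "complex \<Rightarrow> complex \<Rightarrow> complex \<Rightarrow> nat \<Rightarrow> int \<Rightarrow> complex" where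
  "F a0 a1 a2 0 k = (if k = 0 then 1 else 0)"
| "F a0 a1 a2 (Suc n) k =
     (if k < 0 then 0
      else (a2 * of_nat (Suc n) + a1 * of_int k + a0) * F a0 a1 a2 n k
           + F a0 a1 a2 n (k - 1))"

end

theory Submission
  imports Defs
begin

lemma F_neg: "k < 0 \<Longrightarrow> F a0 a1 a2 n k = 0"
  by (cases n) auto

lemma comb_id:
  fixes P :: "nat \<Rightarrow> complex"
  shows "(\<Sum>j=0..Suc m. (-1) ^ (Suc m - j) * of_nat (Suc m choose j) * (of_nat j * P j))
     = of_nat (Suc m) * (\<Sum>j=0..Suc m. (-1) ^ (Suc m - j) * of_nat (Suc m choose j) * P j)
       + of_nat (Suc m) * (\<Sum>j=0..m. (-1) ^ (m - j) * of_nat (m choose j) * P j)"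
proof -
  have t: "(-1) ^ (Suc m - j) * of_nat (Suc m choose j) * (of_nat j * P j)
      = of_nat (Suc m) * ((-1) ^ (Suc m - j) * of_nat (Suc m choose j) * P j)
        + of_nat (Suc m) * ((-1) ^ (m - j) * of_nat (m choose j) * P j)" if "j \<le> m" for j
  proof -
    have a: "(Suc m - j) * (Suc m choose j) = Suc m * (m choose j)"
      using binomial_absorb_comp[of "Suc m" j] by simp
    hence a': "(of_nat (Suc m) - of_nat j) * (of_nat (Suc m choose j) :: complex) = of_nat (Suc m) * of_nat (m choose j)"
      using that by (metis of_nat_diff of_nat_mult le_SucI)
    have s: "Suc m - j = Suc (m - j)" using that by simp
    have "(-1) ^ (Suc m - j) * of_nat (Suc m choose j) * (of_nat j * P j)
       - of_nat (Suc m) * ((-1) ^ (Suc m - j) * of_nat (Suc m choose j) * P j)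
       = (-1) ^ (Suc m - j) * P j * ((of_nat j - of_nat (Suc m)) * of_nat (Suc m choose j))"
      by (simp add: algebra_simps)
    also have "\<dots> = (-1) ^ (m - j) * P j * ((of_nat (Suc m) - of_nat j) * of_nat (Suc m choose j))"
      unfolding s by (simp add: algebra_simps)
    also have "\<dots> = of_nat (Suc m) * ((-1) ^ (m - j) * of_nat (m choose j) * P j)"
      unfolding a' by (simp add: algebra_simps)
    finally show ?thesis by (simp add: algebra_simps)
  qed
  have "(\<Sum>j=0..Suc m. (-1) ^ (Suc m - j) * of_nat (Suc m choose j) * (of_nat j * P j))
     = (\<Sum>j=0..m. (-1) ^ (Suc m - j) * of_nat (Suc m choose j) * (of_nat j * P j))
       + of_nat (Suc m) * P (Suc m)" by simp
  also have "(\<Sum>j=0..m. (-1) ^ (Suc m - j) * of_nat (Suc m choose j) * (of_nat j * P j))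
     = (\<Sum>j=0..m. of_nat (Suc m) * ((-1) ^ (Suc m - j) * of_nat (Suc m choose j) * P j)
        + of_nat (Suc m) * ((-1) ^ (m - j) * of_nat (m choose j) * P j))"
    by (rule sum.cong) (auto simp: t)
  also have "\<dots> = of_nat (Suc m) * (\<Sum>j=0..m. (-1) ^ (Suc m - j) * of_nat (Suc m choose j) * P j)
      + of_nat (Suc m) * (\<Sum>j=0..m. (-1) ^ (m - j) * of_nat (m choose j) * P j)"
    by (simp add: sum.distrib sum_distrib_left)
  finally show ?thesis by (simp add: algebra_simps)
qed

lemma base_sum: "(\<Sum>j=0..k. (-1) ^ (k - j) * (of_nat (k choose j) :: complex)) = (if k = 0 then 1 else 0)"
proof -
  have "(1 + (-1::complex)) ^ k = (\<Sum>j\<le>k. of_nat (k choose j) * 1 ^ j * (-1) ^ (k - j))"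
    by (rule binomial_ring)
  thus ?thesis by (cases k) (simp_all add: atLeast0AtMost mult.commute)
qed

theorem mainTheorem1:
  fixes a0 a1 a2 :: complex and n k :: nat
  assumes "a1 \<noteq> 0" and "a2 \<noteq> 0"
  shows "F a0 a1 a2 n (int k) =
    (1 / (a1 ^ k * of_nat (fact k))) *
    (\<Sum>j=0..k. (-1) ^ (k - j) * of_nat (k choose j) *
        (\<Prod>r=1..n. a0 + a1 * of_nat j + of_nat r * a2))"
proof (induction n arbitrary: k)
  case 0
  show ?case using base_sum[of k] by simp
next
  case (Suc n)
  define P where "P j = (\<Prod>r=1..n. a0 + a1 * of_nat j + of_nat r * a2)" for j :: nat
  define S where "S k = (\<Sum>j=0..k. (-1) ^ (k - j) * of_nat (k choose j) * P j)" for k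
  define c where "c = a0 + of_nat (Suc n) * a2"
  have IH: "F a0 a1 a2 n (int k) = S k / (a1 ^ k * of_nat (fact k))" for k
    using Suc.IH[of k] unfolding S_def P_def by simp
  have PS: "(\<Prod>r=1..Suc n. a0 + a1 * of_nat j + of_nat r * a2) = c * P j + a1 * (of_nat j * P j)" for j
    unfolding P_def c_def by (simp add: algebra_simps)
  have S1: "(\<Sum>j=0..k. (-1) ^ (k - j) * of_nat (k choose j) *
        (\<Prod>r=1..Suc n. a0 + a1 * of_nat j + of_nat r * a2))
      = c * S k + a1 * (\<Sum>j=0..k. (-1) ^ (k - j) * of_nat (k choose j) * (of_nat j * P j))" for k
    unfolding PS S_def by (simp add: algebra_simps sum.distrib sum_distrib_left)
  show ?case
  proof (cases k)
    case 0
    have "F a0 a1 a2 (Suc n) (int k) = c * F a0 a1 a2 n 0"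
      using F_neg[of "-1"] 0 by (simp add: c_def algebra_simps)
    thus ?thesis using S1[of 0] IH[of 0] 0 by simp
  next
    case (Suc m)
    have ne: "a1 ^ Suc m * of_nat (fact (Suc m)) \<noteq> 0" using assms by (metis fact_nonzero mult_eq_0_iff of_nat_eq_0_iff power_not_zero)
    have ne2: "a1 ^ m * of_nat (fact m) \<noteq> 0" using assms by simp
    have "F a0 a1 a2 (Suc n) (int k) = (c + a1 * of_nat (Suc m)) * F a0 a1 a2 n (int (Suc m)) + F a0 a1 a2 n (int m)"
      using Suc by (simp add: c_def algebra_simps)
    also have "\<dots> = (c + a1 * of_nat (Suc m)) * (S (Suc m) / (a1 ^ Suc m * of_nat (fact (Suc m))))
        + S m / (a1 ^ m * of_nat (fact m))" by (simp only: IH)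
    also have "\<dots> = (c * S (Suc m) + a1 * (of_nat (Suc m) * S (Suc m) + of_nat (Suc m) * S m))
        / (a1 ^ Suc m * of_nat (fact (Suc m)))"
    proof -
      define D where "D = a1 ^ m * of_nat (fact m)"
      have dd: "a1 ^ Suc m * of_nat (fact (Suc m)) = a1 * of_nat (Suc m) * D"
        unfolding D_def by (simp add: fact_Suc algebra_simps)
      have D0: "D \<noteq> 0" using ne2 D_def by simp
      have m0: "(of_nat (Suc m) :: complex) \<noteq> 0" by (simp del: of_nat_Suc)
      show ?thesis unfolding dd D_def[symmetric]
        using D0 m0 assms(1) by (simp add: divide_simps del: of_nat_Suc) (simp add: algebra_simps)
    qed
    also have "\<dots> = (\<Sum>j=0..k. (-1) ^ (k - j) * of_nat (k choose j) *
        (\<Prod>r=1..Suc n. a0 + a1 * of_nat j + of_nat r * a2)) / (a1 ^ k * of_nat (fact k))"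
      unfolding S1 Suc using comb_id[of m P] unfolding S_def by simp
    finally show ?thesis by simp
  qed
qed

end
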